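(* Let $t>0$, $a=(a_1,a_2,a_3):=(0,t,1/t)$, and let $\beta=\beta(t)\in(0,1)$ be defined by $\frac{t+i}{t-i}=e^{2\pi i\beta}$. Let $\mu$ be a real number and suppose there is a constant $C>0$ such that $$\left|\beta-\frac{n}{m}\right|\geq\frac{C}{m^\mu}\quad\text{for all } n,m\in\mathbb Z,\ m\ne0.$$ Then there is a constant $D>0$ such that $$\left|\det M_{m,2,a}\right|\geq\frac{D}{m^{2\mu-2}}\quad\text{for all integers } m\ge1.$$
   Context: For real $s$, $A(s):=\frac{s+i}{s-i}$, and $A_j:=A(a_j)$. For $m\ge0$, $M_{m,2,a}$ is the $4\times4$ matrix with rows $(1,1,1,1)$ and $(1,A_j,A_j^{m+3},A_j^{m+4})$ for $j=1,2,3$. *)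

theory Defs
  imports "HOL-Analysis.Analysis"
begin

definition Aop :: "real \<Rightarrow> complex" where
  "Aop s = (complex_of_real s + \<i>) / (complex_of_real s - \<i>)"

definition rowM :: "nat \<Rightarrow> real \<Rightarrow> complex ^ 4" where
  "rowM m s = vector [1, Aop s, Aop s ^ (m + 3), Aop s ^ (m + 4)]"

definition M2 :: "nat \<Rightarrow> real \<Rightarrow> real \<Rightarrow> real \<Rightarrow> complex ^ 4 ^ 4" where
  "M2 m a1 a2 a3 = vector [vector [1, 1, 1, 1], rowM m a1, rowM m a2, rowM m a3]"

end

theory Submission
  imports Defs
begin

lemma Aop0: "Aop 0 = -1" by (simp add: Aop_def)

lemma vector_4 [simp]:
 "(vector [x,y,z,u] ::('a::zero)^4)$1 = x"
 "(vector [x,y,z,u] ::('a::zero)^4)$2 = y"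
 "(vector [x,y,z,u] ::('a::zero)^4)$3 = z"
 "(vector [x,y,z,u] ::('a::zero)^4)$4 = u"
  unfolding vector_def by simp_all

lemma det_4:
  "det (A::'a::comm_ring_1^4^4) =
  A$1$1*A$2$2*A$3$3*A$4$4 - A$1$1*A$2$2*A$3$4*A$4$3 - A$1$1*A$2$3*A$3$2*A$4$4
 + A$1$1*A$2$3*A$3$4*A$4$2 + A$1$1*A$2$4*A$3$2*A$4$3 - A$1$1*A$2$4*A$3$3*A$4$2
 - A$1$2*A$2$1*A$3$3*A$4$4 + A$1$2*A$2$1*A$3$4*A$4$3 + A$1$2*A$2$3*A$3$1*A$4$4
 - A$1$2*A$2$3*A$3$4*A$4$1 - A$1$2*A$2$4*A$3$1*A$4$3 + A$1$2*A$2$4*A$3$3*A$4$1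
 + A$1$3*A$2$1*A$3$2*A$4$4 - A$1$3*A$2$1*A$3$4*A$4$2 - A$1$3*A$2$2*A$3$1*A$4$4
 + A$1$3*A$2$2*A$3$4*A$4$1 + A$1$3*A$2$4*A$3$1*A$4$2 - A$1$3*A$2$4*A$3$2*A$4$1
 - A$1$4*A$2$1*A$3$2*A$4$3 + A$1$4*A$2$1*A$3$3*A$4$2 + A$1$4*A$2$2*A$3$1*A$4$3
 - A$1$4*A$2$2*A$3$3*A$4$1 - A$1$4*A$2$3*A$3$1*A$4$2 + A$1$4*A$2$3*A$3$2*A$4$1"
proof -
  have f1: "finite {2::4, 3, 4}" "1 \<notin> {2::4, 3, 4}" by auto
  have f2: "finite {3::4, 4}" "2 \<notin> {3::4, 4}" by auto
  have f3: "finite {4::4}" "3 \<notin> {4::4}" by auto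
  show ?thesis
    unfolding det_def UNIV_4
    unfolding sum_over_permutations_insert[OF f1]
    unfolding sum_over_permutations_insert[OF f2]
    unfolding sum_over_permutations_insert[OF f3]
    unfolding permutes_sing
    by (simp add: sign_swap_id permutation_swap_id permutation_compose sign_compose sign_id swap_id_eq algebra_simps)
qed

definition G :: "complex \<Rightarrow> complex \<Rightarrow> complex \<Rightarrow> complex \<Rightarrow> complex \<Rightarrow> complex \<Rightarrow> complex \<Rightarrow> complex \<Rightarrow> complex \<Rightarrow> complex" where
 "G a a1 a2 b b1 b2 c c1 c2 = det (vector [vector [1,1,1,1], vector [1,a,a1,a2], vector [1,b,b1,b2], vector [1,c,c1,c2]] :: complex^4^4)"

lemma G_eq: "G a a1 a2 b b1 b2 c c1 c2 =
  a*b1*c2 - a*b2*c1 - a1*b*c2 + a1*b2*c + a2*b*c1 - a2*b1*c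
 - (b1*c2 - b2*c1 - b*c2 + b2*c + b*c1 - b1*c)
 + (a1*c2 - a2*c1 - a*c2 + a2*c + a*c1 - a1*c)
 - (a1*b2 - a2*b1 - a*b2 + a2*b + a*b1 - a1*b)"
  unfolding G_def det_4 by (simp add: algebra_simps)

lemma keyodd:
  fixes z u p q :: complex
  assumes "z * u = 1" "p * q = 1"
  shows "G (-1) (-1) 1 (z^2) (p^2) (p^2*z^2) (-(u^2)) (-(q^2)) (q^2*u^2) = 4*(p*z - q*u)*(p*u - q*z)"
  unfolding G_eq using assms by algebra

lemma keyeven:
  fixes z u p q :: complex
  assumes "z * u = 1" "p * q = 1"
  shows "G (-1) 1 (-1) (z^2) (p^2) (p^2*z^2) (-(u^2)) (q^2) (-(q^2*u^2)) = -2*(z^2+u^2)*(p - q)^2"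
  unfolding G_eq using assms by algebra
lemma sin_half:
  fixes y :: real
  assumes "\<bar>y\<bar> \<le> pi/2"
  shows "\<bar>y\<bar>/2 \<le> \<bar>sin y\<bar>"
proof -
  have s: "(\<Sum>m<3. sin_coeff m * y ^ m) = y"
    by (simp add: numeral_3_eq_3 sin_coeff_def)
  have b: "\<bar>sin y - y\<bar> \<le> inverse (fact 3) * \<bar>y\<bar> ^ 3"
    using Maclaurin_sin_bound[of y 3] unfolding s .
  have f: "(fact 3 :: real) = 6" by (simp add: numeral_3_eq_3)
  have p: "pi \<le> 3.2" using pi_approx by simp
  have "\<bar>y\<bar>^2 \<le> (pi/2)^2" using assms by (intro power_mono) auto
  also have "\<dots> \<le> 3"
  proof -
    have "pi * pi \<le> 3.2 * 3.2" using p pi_gt_zero by (intro mult_mono) auto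
    thus ?thesis by (simp add: power2_eq_square)
  qed
  finally have y2: "\<bar>y\<bar>^2 \<le> 3" .
  have "\<bar>y\<bar> ^ 3 = \<bar>y\<bar> * \<bar>y\<bar>^2" by (simp add: power_def numeral_3_eq_3 power2_eq_square)
  also have "\<dots> \<le> \<bar>y\<bar> * 3" using y2 by (intro mult_left_mono) auto
  finally have "\<bar>y\<bar> ^ 3 \<le> 3 * \<bar>y\<bar>" by simp
  with b f have "\<bar>sin y - y\<bar> \<le> \<bar>y\<bar>/2" by simp
  then show ?thesis by linarith
qed

lemma sin_dist:
  fixes x :: real
  shows "\<exists>n::int. \<bar>x - of_int n\<bar> \<le> \<bar>sin (pi * x)\<bar>"
proof -
  define n where "n = round x"
  have r: "\<bar>x - of_int n\<bar> \<le> 1/2" unfolding n_def using of_int_round_abs_le[of x] by linarith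
  define y where "y = pi * (x - of_int n)"
  have s0: "sin (of_int n * pi) = 0" by (simp add: sin_times_pi_eq_0)
  have "(cos (of_int n * pi))^2 = 1" using sin_cos_squared_add[of "of_int n * pi"] s0 by simp
  hence c: "\<bar>cos (of_int n * pi)\<bar> = 1" unfolding power2_eq_1_iff by auto
  have "sin (pi * x) = sin (y + of_int n * pi)" unfolding y_def by (simp add: algebra_simps)
  also have "\<dots> = sin y * cos (of_int n * pi)" using s0 by (simp add: sin_add)
  finally have e: "\<bar>sin (pi * x)\<bar> = \<bar>sin y\<bar>" using c by (simp add: abs_mult)
  have "\<bar>y\<bar> \<le> pi/2" unfolding y_def using r by (simp add: abs_mult)
  hence "\<bar>y\<bar>/2 \<le> \<bar>sin y\<bar>" by (rule sin_half)
  moreover have "\<bar>x - of_int n\<bar> \<le> \<bar>y\<bar>/2" unfolding y_def using pi_ge_two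
    by (simp add: abs_mult mult.commute[of pi] mult_left_mono)
  ultimately have "\<bar>x - of_int n\<bar> \<le> \<bar>sin (pi * x)\<bar>" using e by linarith
  then show ?thesis by blast
qed

lemma sinkb:
  fixes \<beta> \<mu> C :: real and k :: nat
  assumes H: "\<forall>n m :: int. m \<noteq> 0 \<longrightarrow> \<bar>\<beta> - real_of_int n / real_of_int m\<bar> \<ge> C / (\<bar>real_of_int m\<bar> powr \<mu>)"
    and k: "k \<ge> 1"
  shows "C * real k powr (1 - \<mu>) \<le> \<bar>sin (pi * real k * \<beta>)\<bar>"
proof -
  obtain n :: int where n: "\<bar>real k * \<beta> - of_int n\<bar> \<le> \<bar>sin (pi * (real k * \<beta>))\<bar>" using sin_dist by blast
  have "C / (real k powr \<mu>) \<le> \<bar>\<beta> - of_int n / real k\<bar>" using H[rule_format, of "int k" n] k by simp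
  hence "real k * (C / (real k powr \<mu>)) \<le> real k * \<bar>\<beta> - of_int n / real k\<bar>" using k by (intro mult_left_mono) auto
  also have "real k * \<bar>\<beta> - of_int n / real k\<bar> = \<bar>real k * \<beta> - of_int n\<bar>"
  proof -
    have "real k * \<beta> - of_int n = real k * (\<beta> - of_int n / real k)" using k by (simp add: field_simps)
    thus ?thesis by (simp add: abs_mult)
  qed
  also have "real k * (C / (real k powr \<mu>)) = C * real k powr (1 - \<mu>)" using k
    by (simp add: powr_diff)
  finally show ?thesis using n by (simp add: mult.assoc)
qed

lemma powr_cmp:
  fixes e :: real and m k :: nat
  assumes "m \<ge> 1" "real m \<le> real k" "real k \<le> 5 * real m"
  shows "min 1 (5 powr e) * real m powr e \<le> real k powr e"
proof (cases "e \<ge> 0")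
  case True
  have "real m powr e \<le> real k powr e" using assms True by (intro powr_mono2) auto
  moreover have "min 1 (5 powr e) * real m powr e \<le> real m powr e" by (simp add: mult_left_le_one_le min_le_iff_disj)
  ultimately show ?thesis by linarith
next
  case False
  have "(5 * real m) powr e \<le> real k powr e" using assms False by (intro powr_mono2') auto
  moreover have "(5 * real m) powr e = 5 powr e * real m powr e" by (simp add: powr_mult)
  moreover have "min 1 (5 powr e) * real m powr e \<le> 5 powr e * real m powr e" by (intro mult_right_mono) auto
  ultimately show ?thesis by linarith
qed

lemma cdiff:
  fixes y :: real
  shows "cmod (exp (\<i> * of_real y) ^ k - exp (-(\<i> * of_real y)) ^ k) = 2 * \<bar>sin (real k * y)\<bar>"
proof -
  have "exp (\<i> * of_real y) ^ k - exp (-(\<i> * of_real y)) ^ k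
      = exp (\<i> * of_real (real k * y)) - exp (-(\<i> * of_real (real k * y)))"
    by (simp add: exp_of_nat_mult[symmetric] algebra_simps)
  also have "\<dots> = 2 * \<i> * sin (of_real (real k * y))" by (simp add: sin_exp_eq del: sin_of_real)
  also have "\<dots> = 2 * \<i> * of_real (sin (real k * y))" by (simp only: sin_of_real)
  finally show ?thesis by (simp only: norm_mult norm_of_real) simp
qed

lemma csum:
  fixes y :: real
  shows "cmod (exp (\<i> * of_real y) ^ 2 + exp (-(\<i> * of_real y)) ^ 2) = 2 * \<bar>cos (2 * y)\<bar>"
proof -
  have "exp (\<i> * of_real y) ^ 2 + exp (-(\<i> * of_real y)) ^ 2
      = exp (\<i> * of_real (2 * y)) + exp (-(\<i> * of_real (2 * y)))"
    using exp_of_nat_mult[of 2 "\<i> * of_real y"] exp_of_nat_mult[of 2 "-(\<i> * of_real y)"]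
    by (simp add: algebra_simps)
  also have "\<dots> = 2 * cos (of_real (2 * y))" by (simp add: cos_exp_eq del: cos_of_real)
  also have "\<dots> = 2 * of_real (cos (2 * y))" by (simp only: cos_of_real)
  finally show ?thesis by (simp only: norm_mult norm_of_real) simp
qed

lemma even_norm:
  fixes z u dd :: complex and A b :: real
  assumes zk: "\<And>k. cmod (z^k - u^k) = 2 * \<bar>sin (pi * real k * b)\<bar>"
   and zs: "cmod (z^2 + u^2) = 2 * A"
   and h: "dd = -2*(z^2+u^2)*(z^(m+3) - u^(m+3))^2"
  shows "cmod dd = 16 * (A * \<bar>sin (pi * real (m+3) * b)\<bar>^2)"
proof -
  have "cmod dd = 2 * cmod (z^2+u^2) * cmod (z^(m+3) - u^(m+3))^2"
    unfolding h by (simp only: norm_mult norm_power) simp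
  also have "\<dots> = 2 * (2 * A) * (2 * \<bar>sin (pi * real (m+3) * b)\<bar>)^2" by (simp only: zs zk)
  also have "\<dots> = 16 * (A * \<bar>sin (pi * real (m+3) * b)\<bar>^2)" by (simp add: power_mult_distrib)
  finally show ?thesis .
qed

theorem proposition6p2:
  fixes t \<beta> \<mu> C :: real
  assumes "t > 0"
    and "0 < \<beta>" and "\<beta> < 1"
    and "(complex_of_real t + \<i>) / (complex_of_real t - \<i>) = exp (2 * pi * \<i> * complex_of_real \<beta>)"
    and "C > 0"
    and "\<forall>n m :: int. m \<noteq> 0 \<longrightarrow> \<bar>\<beta> - real_of_int n / real_of_int m\<bar> \<ge> C / (\<bar>real_of_int m\<bar> powr \<mu>)"
  shows "\<exists>D > 0. \<forall>m :: nat. m \<ge> 1 \<longrightarrow> cmod (det (M2 m 0 t (1 / t))) \<ge> D / (real m powr (2 * \<mu> - 2))"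
proof -
  note H = assms(6)
  define x where "x = \<i> * complex_of_real (pi * \<beta>)"
  define z where "z = exp x"
  define u where "u = exp (-x)"
  have zu: "z * u = 1" unfolding z_def u_def by (simp add: exp_add[symmetric])
  have z2: "z^2 = exp (2 * pi * \<i> * complex_of_real \<beta>)"
    unfolding z_def using exp_of_nat_mult[of 2 x] by (simp add: x_def algebra_simps)
  have AopT: "Aop t = z^2" using assms(4) z2 by (simp add: Aop_def)
  have n1: "complex_of_real t + \<i> \<noteq> 0" by (auto simp: complex_eq_iff)
  have n2: "complex_of_real t - \<i> \<noteq> 0" by (auto simp: complex_eq_iff)
  have n3: "complex_of_real (1/t) - \<i> \<noteq> 0" by (auto simp: complex_eq_iff)
  have n4: "complex_of_real t \<noteq> 0" using assms(1) by simp
  have u2: "u^2 = inverse (z^2)" unfolding u_def z_def by (simp only: exp_minus power_inverse)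
  have AopI: "Aop (1/t) = -(u^2)"
  proof -
    have "u^2 = (complex_of_real t - \<i>) / (complex_of_real t + \<i>)"
      using u2 AopT unfolding Aop_def by (metis inverse_divide)
    moreover have "Aop (1/t) = - ((complex_of_real t - \<i>) / (complex_of_real t + \<i>))"
    proof -
      have e: "complex_of_real (1/t) = inverse (complex_of_real t)" by (metis of_real_inverse inverse_eq_divide)
      show ?thesis unfolding Aop_def e using n1 n2 n4 n3[unfolded e]
        by (simp add: field_simps)
    qed
    ultimately show ?thesis by simp
  qed
  define c0 where "c0 = min 1 (5 powr (1 - \<mu>))"
  have c0: "c0 > 0" unfolding c0_def by simp
  define cm where "cm = min 1 \<bar>cos (2 * (pi * \<beta>))\<bar>"
  have cos0: "cos (2 * (pi * \<beta>)) \<noteq> 0"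
  proof
    assume "cos (2 * (pi * \<beta>)) = 0"
    then obtain i :: int where "2 * (pi * \<beta>) = of_int i * (pi/2)" using cos_zero_iff_int by blast
    hence "\<beta> = of_int i / 4" by (simp add: field_simps)
    moreover have "C / (\<bar>real_of_int 4\<bar> powr \<mu>) \<le> \<bar>\<beta> - of_int i / of_int 4\<bar>" using H[rule_format, of 4 i] by simp
    moreover have "C / (4 powr \<mu>) > 0" using assms(5) by simp
    ultimately show False by simp
  qed
  have cm: "cm > 0" "cm \<le> 1" "cm \<le> \<bar>cos (2 * (pi * \<beta>))\<bar>" using cos0 unfolding cm_def by auto
  define D where "D = 16 * C^2 * c0^2 * cm"
  have Dpos: "D > 0" unfolding D_def using c0 cm assms(5) by simp
  have zk: "cmod (z^k - u^k) = 2 * \<bar>sin (pi * real k * \<beta>)\<bar>" for k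
    unfolding z_def u_def x_def using cdiff[of "pi * \<beta>" k] by (simp add: algebra_simps)
  have zs: "cmod (z^2 + u^2) = 2 * \<bar>cos (2 * (pi * \<beta>))\<bar>"
    unfolding z_def u_def x_def using csum[of "pi * \<beta>"] by simp
  show ?thesis
  proof (intro exI[of _ D] conjI allI impI)
    show "D > 0" by (rule Dpos)
    fix m :: nat
    assume m: "m \<ge> 1"
    define P where "P = real m powr (1 - \<mu>)"
    have P: "P > 0" unfolding P_def using m by simp
    have L: "C * c0 * P \<le> \<bar>sin (pi * real k * \<beta>)\<bar>" if "real m \<le> real k" "real k \<le> 5 * real m" for k
    proof -
      have k1: "k \<ge> 1" using that m by linarith
      have "c0 * P \<le> real k powr (1 - \<mu>)" unfolding c0_def P_def using powr_cmp[OF m that] .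
      hence "C * (c0 * P) \<le> C * real k powr (1 - \<mu>)" using assms(5) by (intro mult_left_mono) auto
      also have "\<dots> \<le> \<bar>sin (pi * real k * \<beta>)\<bar>" by (rule sinkb[OF H k1])
      finally show ?thesis by (simp add: mult.assoc)
    qed
    have L2: "C * c0 * P \<le> \<bar>sin (pi * real (m+2) * \<beta>)\<bar>" using L[of "m+2"] m by simp
    have L3: "C * c0 * P \<le> \<bar>sin (pi * real (m+3) * \<beta>)\<bar>" using L[of "m+3"] m by simp
    have L4: "C * c0 * P \<le> \<bar>sin (pi * real (m+4) * \<beta>)\<bar>" using L[of "m+4"] m by simp
    have CP: "0 \<le> C * c0 * P" using assms(5) c0 P by simp
    have goal_eq: "D / (real m powr (2 * \<mu> - 2)) = 16 * cm * (C * c0 * P)^2"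
    proof -
      have "P^2 = real m powr ((1-\<mu>)+(1-\<mu>))" unfolding P_def power2_eq_square by (simp only: powr_add)
      also have "(1-\<mu>)+(1-\<mu>) = -(2*\<mu>-2)" by simp
      finally have "P^2 = inverse (real m powr (2*\<mu>-2))" by (simp only: powr_minus)
      hence "D / (real m powr (2 * \<mu> - 2)) = D * P^2" by (simp add: divide_inverse)
      thus ?thesis unfolding D_def by (simp add: power_mult_distrib mult_ac)
    qed
    define N where "N = m + 3"
    define p where "p = z^N"
    define q where "q = u^N"
    have pq: "p * q = 1"
    proof -
      have "p * q = (z * u)^N" unfolding p_def q_def by (simp only: power_mult_distrib)
      thus ?thesis using zu by simp
    qed
    have detG: "det (M2 m 0 t (1/t)) = G (-1) ((-1)^N) ((-1)^(N+1)) (z^2) (p^2) (p^2*z^2) (-(u^2)) ((-1)^N*q^2) ((-1)^(N+1)*(q^2*u^2))"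
    proof -
      have e1: "(z^2)^N = p^2" unfolding p_def by (metis power_mult mult.commute)
      have e2: "(z^2)^(N+1) = p^2*z^2" using e1 by simp
      have e3: "(-(u^2))^N = (-1)^N*q^2" unfolding q_def by (metis power_minus power_mult mult.commute)
      have "(-(u^2))^(N+1) = (-(u^2))^N * (-(u^2))" by (simp only: power_add power_one_right)
      hence e4: "(-(u^2))^(N+1) = (-1)^(N+1)*(q^2*u^2)" using e3 by simp
      have d0: "det (M2 m 0 t (1/t)) = G (-1) ((-1)^(m+3)) ((-1)^(m+4)) (z^2) ((z^2)^(m+3)) ((z^2)^(m+4)) (-(u^2)) ((-(u^2))^(m+3)) ((-(u^2))^(m+4))"
        unfolding M2_def rowM_def G_def Aop0 AopT AopI by (rule refl)
      have m3: "m+3 = N" and m4: "m+4 = N+1" unfolding N_def by simp_all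
      show ?thesis using d0 by (simp only: m3 m4 e1 e2 e3 e4)
    qed
    have h4: "m+4 = Suc (m+3)" by simp
    have pz: "p * z = z^(m+4)" unfolding p_def N_def by (simp only: h4 power_Suc2)
    have qu: "q * u = u^(m+4)" unfolding q_def N_def by (simp only: h4 power_Suc2)
    have pu: "p * u = z^(m+2)"
    proof -
      have "p * u = z^(m+2) * (z * u)" unfolding p_def N_def by (simp add: power_add power3_eq_cube power2_eq_square mult_ac)
      thus ?thesis using zu by simp
    qed
    have qz: "q * z = u^(m+2)"
    proof -
      have "q * z = u^(m+2) * (z * u)" unfolding q_def N_def by (simp add: power_add power3_eq_cube power2_eq_square mult_ac)
      thus ?thesis using zu by simp
    qed
    show "D / (real m powr (2 * \<mu> - 2)) \<le> cmod (det (M2 m 0 t (1/t)))"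
    proof (cases "even N")
      case False
      hence "det (M2 m 0 t (1/t)) = 4*(p*z - q*u)*(p*u - q*z)"
        unfolding detG using keyodd[OF zu pq] False by (simp add: neg_one_odd_power)
      hence "cmod (det (M2 m 0 t (1/t))) = 4 * cmod (z^(m+4) - u^(m+4)) * cmod (z^(m+2) - u^(m+2))"
        unfolding pz qu pu qz by (simp only: norm_mult) simp
      also have "\<dots> = 16 * \<bar>sin (pi * real (m+4) * \<beta>)\<bar> * \<bar>sin (pi * real (m+2) * \<beta>)\<bar>"
        unfolding zk by simp
      finally have cd: "cmod (det (M2 m 0 t (1/t))) = 16 * \<bar>sin (pi * real (m+4) * \<beta>)\<bar> * \<bar>sin (pi * real (m+2) * \<beta>)\<bar>" .
      moreover have "(C * c0 * P)^2 \<le> \<bar>sin (pi * real (m+4) * \<beta>)\<bar> * \<bar>sin (pi * real (m+2) * \<beta>)\<bar>"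
        unfolding power2_eq_square using L2 L4 CP by (intro mult_mono) auto
      moreover have "cm * (C * c0 * P)^2 \<le> (C * c0 * P)^2" using cm by (simp add: mult_left_le_one_le)
      ultimately have "cm * (C * c0 * P)^2 \<le> \<bar>sin (pi * real (m+4) * \<beta>)\<bar> * \<bar>sin (pi * real (m+2) * \<beta>)\<bar>"
        by linarith
      hence le: "16 * (cm * (C * c0 * P)^2) \<le> 16 * (\<bar>sin (pi * real (m+4) * \<beta>)\<bar> * \<bar>sin (pi * real (m+2) * \<beta>)\<bar>)"
        by simp
      have "D / (real m powr (2 * \<mu> - 2)) = 16 * (cm * (C * c0 * P)^2)" using goal_eq by (simp only: mult.assoc)
      also have "\<dots> \<le> 16 * (\<bar>sin (pi * real (m+4) * \<beta>)\<bar> * \<bar>sin (pi * real (m+2) * \<beta>)\<bar>)" by (rule le)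
      also have "\<dots> = cmod (det (M2 m 0 t (1/t)))" using cd by (simp only: mult.assoc)
      finally show ?thesis .
    next
      case True
      hence "det (M2 m 0 t (1/t)) = -2*(z^2+u^2)*(p - q)^2"
        unfolding detG using keyeven[OF zu pq] True by (simp add: neg_one_even_power)
      hence cd: "cmod (det (M2 m 0 t (1/t))) = 16 * (\<bar>cos (2 * (pi * \<beta>))\<bar> * \<bar>sin (pi * real (m+3) * \<beta>)\<bar>^2)"
        unfolding p_def q_def N_def by (rule even_norm[OF zk zs])
      have "(C * c0 * P)^2 \<le> \<bar>sin (pi * real (m+3) * \<beta>)\<bar>^2"
        using L3 CP by (intro power_mono) auto
      hence le: "cm * (C * c0 * P)^2 \<le> \<bar>cos (2 * (pi * \<beta>))\<bar> * \<bar>sin (pi * real (m+3) * \<beta>)\<bar>^2"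
        using cm by (intro mult_mono) auto
      have "D / (real m powr (2 * \<mu> - 2)) = 16 * (cm * (C * c0 * P)^2)" using goal_eq by (simp only: mult.assoc)
      also have "\<dots> \<le> 16 * (\<bar>cos (2 * (pi * \<beta>))\<bar> * \<bar>sin (pi * real (m+3) * \<beta>)\<bar>^2)" using le by simp
      also have "\<dots> = cmod (det (M2 m 0 t (1/t)))" using cd by (rule sym)
      finally show ?thesis .
    qed
  qed
qed

end
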